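(* Let $(S,\Delta,\mathbb{P})$ be a probability space, $(U,d)$ a separable metric space, $\mathfrak{X}$ the set of $U$-valued random variables on $S$, $\mathcal{I}$ an ideal on $\mathbb{N}$, and $\underline{X}=\{X_n\}$ a sequence in $\mathfrak{X}$. If $\mathfrak{B}$ is a totally bounded subset of $(\mathfrak{X}^0,\rho)$ such that $\{n\in\mathbb{N}:X_n\in\mathfrak{B}\}\notin\mathcal{I}$, then $\Gamma^{r^w}_{\underline{X}}(\mathcal{I}^{\mathbb{P}})\neq\varnothing$ for every $r>0$.
   Context: The Ky Fan metric is $\rho(X,Y)=\inf\{\varepsilon>0:\mathbb{P}(d(X,Y)>\varepsilon)\leq\varepsilon\}$; $\mathfrak{X}^0$ is the set of equivalence classes of $\mathfrak{X}$ under almost sure equality, on which $\rho$ is a metric. An ideal on $\mathbb{N}$ is a family $\mathcal{I}\subseteq\mathcal{P}(\mathbb{N})$ with $\varnothing\in\mathcal{I}$, closed under finite unions and under subsets. $\Gamma^{r^w}_{\underline{X}}(\mathcal{I}^{\mathbb{P}})$ (weak rough $\mathcal{I}$-cluster points in probability) is the set of $Y\in\mathfrak{X}$ for which there is $\delta_*=\delta_*(Y)>0$ with $\{n:\mathbb{P}(d(X_n,Y)<r+\varepsilon)>\delta_*\}\notin\mathcal{I}$ for every $\varepsilon>0$. *)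

theory Defs
  imports "HOL-Probability.Probability"
begin

definition nat_ideal :: "nat set set \<Rightarrow> bool" where
  "nat_ideal I \<longleftrightarrow> {} \<in> I \<and> (\<forall>A\<in>I. \<forall>B\<in>I. A \<union> B \<in> I) \<and> (\<forall>A\<in>I. \<forall>B. B \<subseteq> A \<longrightarrow> B \<in> I)"

definition rand_vars :: "'a measure \<Rightarrow> ('a \<Rightarrow> 'b::metric_space) set" where
  "rand_vars M = borel_measurable M"

text \<open>Ky Fan metric (a pseudometric on random variables; a metric on a.s.-classes).\<close>
definition ky_fan :: "'a measure \<Rightarrow> ('a \<Rightarrow> 'b::metric_space) \<Rightarrow> ('a \<Rightarrow> 'b) \<Rightarrow> real" where
  "ky_fan M X Y = Inf {e. e > 0 \<and> measure M {x \<in> space M. dist (X x) (Y x) > e} \<le> e}"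

text \<open>A set of random variables B, viewed as a subset of the space X^0 of a.s.-classes,
  is totally bounded w.r.t. the Ky Fan metric.\<close>
definition ky_fan_totally_bounded :: "'a measure \<Rightarrow> ('a \<Rightarrow> 'b::metric_space) set \<Rightarrow> bool" where
  "ky_fan_totally_bounded M B \<longleftrightarrow>
     (\<forall>e>0. \<exists>F. finite F \<and> F \<subseteq> B \<and> (\<forall>Y\<in>B. \<exists>Z\<in>F. ky_fan M Y Z < e))"

text \<open>The class of X lies in (the set of classes represented by) B.\<close>
definition class_in :: "'a measure \<Rightarrow> ('a \<Rightarrow> 'b) \<Rightarrow> ('a \<Rightarrow> 'b) set \<Rightarrow> bool" where
  "class_in M X B \<longleftrightarrow> (\<exists>Y\<in>B. AE x in M. X x = Y x)"

definition weak_rough_cluster_points ::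
  "'a measure \<Rightarrow> nat set set \<Rightarrow> real \<Rightarrow> (nat \<Rightarrow> 'a \<Rightarrow> 'b::metric_space) \<Rightarrow> ('a \<Rightarrow> 'b) set" where
  "weak_rough_cluster_points M I r X =
     {Y \<in> rand_vars M. \<exists>\<delta>>0. \<forall>e>0.
        {n. measure M {x \<in> space M. dist (X n x) (Y x) < r + e} > \<delta>} \<notin> I}"

end

theory Submission
  imports Defs
begin

lemma ideal_finite_UN:
  assumes "nat_ideal I" "finite F" "\<forall>Z\<in>F. g Z \<in> I"
  shows "(\<Union>Z\<in>F. g Z) \<in> I"
  using assms(2,3)
proof (induction F rule: finite_induct)
  case empty
  then show ?case using assms(1) by (simp add: nat_ideal_def)
next
  case (insert x F)
  then show ?case using assms(1) unfolding nat_ideal_def by auto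
qed

theorem proposition3p10:
  fixes M :: "'a measure"
    and X :: "nat \<Rightarrow> 'a \<Rightarrow> 'b::{metric_space, second_countable_topology}"
    and I :: "nat set set"
    and B :: "('a \<Rightarrow> 'b) set"
  assumes "prob_space M"
    and "nat_ideal I"
    and "\<And>n. X n \<in> rand_vars M"
    and "B \<subseteq> rand_vars M"
    and "ky_fan_totally_bounded M B"
    and "{n. class_in M (X n) B} \<notin> I"
  shows "\<forall>r>0. weak_rough_cluster_points M I r X \<noteq> {}"
proof (intro allI impI)
  fix r :: real assume r: "r > 0"
  interpret P: prob_space M by fact
  have Xm: "\<And>n. X n \<in> borel_measurable M" using assms(3) by (simp add: rand_vars_def)
  have Bm: "\<And>Y. Y \<in> B \<Longrightarrow> Y \<in> borel_measurable M" using assms(4) by (auto simp: rand_vars_def)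
  define e where "e = min r (1/2)"
  have e: "e > 0" "e \<le> r" "e \<le> 1/2" using r by (auto simp: e_def)
  obtain F where F: "finite F" "F \<subseteq> B" "\<forall>Y\<in>B. \<exists>Z\<in>F. ky_fan M Y Z < e"
    using assms(5) e(1) unfolding ky_fan_totally_bounded_def by blast
  define AZ where "AZ Z = {n. \<exists>e'. 0 < e' \<and> e' < e \<and>
      measure M {x\<in>space M. dist (X n x) (Z x) > e'} \<le> e'}" for Z
  have sub: "{n. class_in M (X n) B} \<subseteq> (\<Union>Z\<in>F. AZ Z)"
  proof
    fix n assume "n \<in> {n. class_in M (X n) B}"
    then obtain Y where Y: "Y \<in> B" "AE x in M. X n x = Y x" by (auto simp: class_in_def)
    obtain Z where Z: "Z \<in> F" "ky_fan M Y Z < e" using F(3) Y(1) by blast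
    have Zm: "Z \<in> borel_measurable M" using Bm F(2) Z(1) by blast
    let ?S = "{e. e > 0 \<and> measure M {x \<in> space M. dist (Y x) (Z x) > e} \<le> e}"
    have "(1::real) \<in> ?S" by simp
    hence "?S \<noteq> {}" by blast
    then obtain e' where e': "e' \<in> ?S" "e' < e"
      using cInf_lessD[of ?S e] Z(2) unfolding ky_fan_def by blast
    have "measure M {x\<in>space M. dist (X n x) (Z x) > e'} = measure M {x \<in> space M. dist (Y x) (Z x) > e'}"
      by (rule measure_eq_AE) (use Y(2) Xm Bm[OF Y(1)] Zm in auto)
    with e' have "n \<in> AZ Z" unfolding AZ_def by auto
    with Z(1) show "n \<in> (\<Union>Z\<in>F. AZ Z)" by blast
  qed
  obtain Z where Z: "Z \<in> F" "AZ Z \<notin> I"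
  proof -
    have "(\<Union>Z\<in>F. AZ Z) \<notin> I"
      using sub assms(2,6) unfolding nat_ideal_def by blast
    then show ?thesis using ideal_finite_UN[OF assms(2) F(1), of AZ] that by blast
  qed
  have Zm: "Z \<in> borel_measurable M" using Bm F(2) Z(1) by blast
  have "Z \<in> weak_rough_cluster_points M I r X"
    unfolding weak_rough_cluster_points_def
  proof (intro CollectI conjI exI[of _ "1/2::real"] allI impI)
    show "Z \<in> rand_vars M" using Zm by (simp add: rand_vars_def)
    show "(0::real) < 1/2" by simp
    fix \<epsilon> :: real assume \<epsilon>: "\<epsilon> > 0"
    have "AZ Z \<subseteq> {n. measure M {x \<in> space M. dist (X n x) (Z x) < r + \<epsilon>} > 1/2}"
    proof
      fix n assume "n \<in> AZ Z"
      then obtain e' where e': "0 < e'" "e' < e"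
        "measure M {x\<in>space M. dist (X n x) (Z x) > e'} \<le> e'" unfolding AZ_def by blast
      have meas: "{x\<in>space M. dist (X n x) (Z x) > e'} \<in> sets M"
        using Xm[of n] Zm by measurable
      have "measure M (space M - {x\<in>space M. dist (X n x) (Z x) > e'}) = 1 - measure M {x\<in>space M. dist (X n x) (Z x) > e'}"
        using P.prob_compl[OF meas] by simp
      moreover have "measure M (space M - {x\<in>space M. dist (X n x) (Z x) > e'}) \<le> measure M {x \<in> space M. dist (X n x) (Z x) < r + \<epsilon>}"
      proof (rule P.finite_measure_mono)
        show "space M - {x\<in>space M. dist (X n x) (Z x) > e'} \<subseteq> {x \<in> space M. dist (X n x) (Z x) < r + \<epsilon>}"
          using e' e \<epsilon> by auto
        show "{x \<in> space M. dist (X n x) (Z x) < r + \<epsilon>} \<in> sets M"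
          using Xm[of n] Zm by measurable
      qed
      ultimately show "n \<in> {n. measure M {x \<in> space M. dist (X n x) (Z x) < r + \<epsilon>} > 1/2}"
        using e' e by auto
    qed
    then show "{n. measure M {x \<in> space M. dist (X n x) (Z x) < r + \<epsilon>} > 1/2} \<notin> I"
      using Z(2) assms(2) unfolding nat_ideal_def by blast
  qed
  then show "weak_rough_cluster_points M I r X \<noteq> {}" by blast
qed

end
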